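(* Let $E$ be a Banach lattice such that the lattice operations in $E'$ are weak* sequentially continuous, i.e. $x_n' \to 0$ weak* in $E'$ implies $|x_n'| \to 0$ weak* in $E'$. Let $A \subset E$. Then $|A| = \{|x| : x \in A\}$ is a Grothendieck set if and only if the solid hull $\mathrm{sol}(A)$ is a Grothendieck set.
   Context: A subset $A$ of a Banach space $X$ is a Grothendieck set if $T(A)$ is relatively weakly compact in $c_0$ for every bounded linear operator $T: X \to c_0$. The solid hull is $\mathrm{sol}(A) = \{x \in E : |x| \le |y| \text{ for some } y \in A\}$. *)

theory Defs
  imports "HOL-Analysis.Analysis" "HOL-Library.Lattice_Algebras"
begin

class banach_lattice = banach + ordered_real_vector + lattice_ab_group_add_abs +
  assumes norm_lattice: "\<bar>x\<bar> \<le> \<bar>y\<bar> \<Longrightarrow> norm x \<le> norm y"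

text \<open>Modulus of a functional in the dual E' (Riesz-Kantorovich formula):
  for x \<ge> 0, |f|(x) = sup { f y : |y| \<le> x }; extended linearly via x = x^+ - x^-.\<close>
definition dual_abs_pos :: "('a::banach_lattice \<Rightarrow>\<^sub>L real) \<Rightarrow> 'a \<Rightarrow> real" where
  "dual_abs_pos f x = Sup {blinfun_apply f y | y. \<bar>y\<bar> \<le> x}"

definition dual_abs :: "('a::banach_lattice \<Rightarrow>\<^sub>L real) \<Rightarrow> 'a \<Rightarrow> real" where
  "dual_abs f x = dual_abs_pos f (sup x 0) - dual_abs_pos f (sup (- x) 0)"

definition weak_star_null :: "(nat \<Rightarrow> ('a::real_normed_vector \<Rightarrow>\<^sub>L real)) \<Rightarrow> bool" where
  "weak_star_null F \<longleftrightarrow> (\<forall>x. (\<lambda>n. blinfun_apply (F n) x) \<longlonglongrightarrow> 0)"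

definition dual_lattice_weak_star_seq_cont :: "'a::banach_lattice itself \<Rightarrow> bool" where
  "dual_lattice_weak_star_seq_cont _ \<longleftrightarrow>
     (\<forall>F :: nat \<Rightarrow> ('a \<Rightarrow>\<^sub>L real). weak_star_null F \<longrightarrow>
        (\<forall>x. (\<lambda>n. dual_abs (F n) x) \<longlonglongrightarrow> 0))"

text \<open>c_0 as the closed subspace of l^infinity (bounded functions on nat, sup norm).\<close>
definition c0 :: "(nat \<Rightarrow>\<^sub>C real) set" where
  "c0 = {f. (\<lambda>n. apply_bcontfun f n) \<longlonglongrightarrow> 0}"

definition bounded_linear_functional_on :: "'b::real_normed_vector set \<Rightarrow> ('b \<Rightarrow> real) \<Rightarrow> bool" where
  "bounded_linear_functional_on S \<phi> \<longleftrightarrow>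
     (\<forall>x\<in>S. \<forall>y\<in>S. \<phi> (x + y) = \<phi> x + \<phi> y) \<and>
     (\<forall>c. \<forall>x\<in>S. \<phi> (c *\<^sub>R x) = c * \<phi> x) \<and>
     (\<exists>C. \<forall>x\<in>S. \<bar>\<phi> x\<bar> \<le> C * norm x)"

definition weak_topology_on :: "'b::real_normed_vector set \<Rightarrow> 'b topology" where
  "weak_topology_on S = topology_generated_by
     {S \<inter> \<phi> -` U | \<phi> U. bounded_linear_functional_on S \<phi> \<and> open U}"

definition relatively_weakly_compact_in :: "'b::real_normed_vector set \<Rightarrow> 'b set \<Rightarrow> bool" where
  "relatively_weakly_compact_in S B \<longleftrightarrow>
     B \<subseteq> S \<and> compactin (weak_topology_on S) ((weak_topology_on S) closure_of B)"

definition grothendieck_set :: "'a::real_normed_vector set \<Rightarrow> bool" where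
  "grothendieck_set A \<longleftrightarrow>
     (\<forall>T :: 'a \<Rightarrow> (nat \<Rightarrow>\<^sub>C real). bounded_linear T \<and> range T \<subseteq> c0 \<longrightarrow>
        relatively_weakly_compact_in c0 (T ` A))"

definition sol :: "'a::banach_lattice set \<Rightarrow> 'a set" where
  "sol A = {x. \<exists>y\<in>A. \<bar>x\<bar> \<le> \<bar>y\<bar>}"

end

theory Submission
  imports Defs
begin

definition mk :: "(nat \<Rightarrow> real) \<Rightarrow> (nat \<Rightarrow>\<^sub>C real)" where
  "mk f = Bcontfun f"

lemma mk_apply:
  assumes "\<And>n. \<bar>f n\<bar> \<le> b"
  shows "apply_bcontfun (mk f) = f"
proof -
  have "continuous_on UNIV f" by simp
  then have "f \<in> bcontfun" using assms by (intro bcontfun_normI[where b=b]) auto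
  then show ?thesis unfolding mk_def by (simp add: Bcontfun_inverse)
qed

lemma c0_add: "x \<in> c0 \<Longrightarrow> y \<in> c0 \<Longrightarrow> x + y \<in> c0"
  unfolding c0_def by (auto intro: tendsto_add_zero)

lemma c0_scale: "x \<in> c0 \<Longrightarrow> c *\<^sub>R x \<in> c0"
  unfolding c0_def using tendsto_mult_right_zero by auto

lemma c0_diff: "x \<in> c0 \<Longrightarrow> y \<in> c0 \<Longrightarrow> x - y \<in> c0"
  unfolding c0_def by (auto intro: tendsto_diff[where a=0 and b=0, simplified])

lemma c0_finsupp:
  assumes "\<And>n. n \<ge> N \<Longrightarrow> apply_bcontfun x n = 0"
  shows "x \<in> c0"
  unfolding c0_def
  by (simp add: LIMSEQ_offset[where k=N] assms)

definition fs :: "nat \<Rightarrow> (nat \<Rightarrow> real) \<Rightarrow> (nat \<Rightarrow>\<^sub>C real)" where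
  "fs N g = mk (\<lambda>m. if m < N then g m else 0)"

definition ee :: "nat \<Rightarrow> (nat \<Rightarrow>\<^sub>C real)" where
  "ee n = mk (\<lambda>m. if m = n then 1 else 0)"

lemma fs_apply: "apply_bcontfun (fs N g) = (\<lambda>m. if m < N then g m else 0)"
  unfolding fs_def
  by (rule mk_apply[where b="\<Sum>k<N. \<bar>g k\<bar>"])
     (auto intro: member_le_sum[where f="\<lambda>k. \<bar>g k\<bar>", simplified])

lemma ee_apply: "apply_bcontfun (ee n) = (\<lambda>m. if m = n then 1 else 0)"
  unfolding ee_def by (rule mk_apply[where b=1]) auto

lemma fs_c0: "fs N g \<in> c0"
  by (rule c0_finsupp[where N=N]) (simp add: fs_apply)

lemma ee_c0: "ee n \<in> c0"
  by (rule c0_finsupp[where N="Suc n"]) (simp add: ee_apply)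

lemma fs_Suc: "fs (Suc N) g = fs N g + g N *\<^sub>R ee N"
  by (rule bcontfun_eqI) (auto simp: fs_apply ee_apply less_Suc_eq)

lemma fs_0: "fs 0 g = 0"
  by (rule bcontfun_eqI) (auto simp: fs_apply)

locale blf =
  fixes \<phi> :: "(nat \<Rightarrow>\<^sub>C real) \<Rightarrow> real"
  assumes blf: "bounded_linear_functional_on c0 \<phi>"
begin

lemma add: "x \<in> c0 \<Longrightarrow> y \<in> c0 \<Longrightarrow> \<phi> (x + y) = \<phi> x + \<phi> y"
  using blf unfolding bounded_linear_functional_on_def by blast

lemma scale: "x \<in> c0 \<Longrightarrow> \<phi> (c *\<^sub>R x) = c * \<phi> x"
  using blf unfolding bounded_linear_functional_on_def by blast

lemma zero: "\<phi> 0 = 0"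
  using scale[of 0 0] unfolding c0_def by simp

lemma diff: "x \<in> c0 \<Longrightarrow> y \<in> c0 \<Longrightarrow> \<phi> (x - y) = \<phi> x - \<phi> y"
  using add[of x "(-1) *\<^sub>R y"] scale[of y "-1"] c0_scale[of y "-1"] by simp

lemma bound_ex: obtains C where "C \<ge> 0" "\<And>x. x \<in> c0 \<Longrightarrow> \<bar>\<phi> x\<bar> \<le> C * norm x"
proof -
  obtain C where C: "\<forall>x\<in>c0. \<bar>\<phi> x\<bar> \<le> C * norm x"
    using blf unfolding bounded_linear_functional_on_def by blast
  have "\<bar>\<phi> x\<bar> \<le> max C 0 * norm x" if "x \<in> c0" for x
    using C that by (smt (verit) mult_right_mono norm_ge_zero)
  then show ?thesis using that[of "max C 0"] by auto
qed

definition "a n = \<phi> (ee n)"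

lemma fs_eval: "\<phi> (fs N g) = (\<Sum>n<N. g n * a n)"
proof (induction N)
  case 0 then show ?case by (simp add: fs_0 zero)
next
  case (Suc N)
  have "\<phi> (fs (Suc N) g) = \<phi> (fs N g) + g N * a N"
    unfolding fs_Suc a_def using add[OF fs_c0 c0_scale[OF ee_c0]] scale[OF ee_c0] by simp
  then show ?case using Suc by simp
qed

lemma summable_a: "summable (\<lambda>n. \<bar>a n\<bar>)"
proof -
  obtain C where C: "C \<ge> 0" "\<And>x. x \<in> c0 \<Longrightarrow> \<bar>\<phi> x\<bar> \<le> C * norm x" using bound_ex by blast
  show ?thesis
  proof (rule summableI_nonneg_bounded[where x=C])
    fix N
    have "(\<Sum>n<N. \<bar>a n\<bar>) = \<phi> (fs N (\<lambda>n. sgn (a n)))"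
      unfolding fs_eval by (rule sum.cong) (auto simp: sgn_real_def)
    also have "\<dots> \<le> C * norm (fs N (\<lambda>n. sgn (a n)))" using C(2)[OF fs_c0, of N "\<lambda>n. sgn (a n)"] by linarith
    also have "\<dots> \<le> C * 1"
      by (rule mult_left_mono[OF _ C(1)], rule norm_bound) (simp add: fs_apply sgn_real_def)
    finally show "(\<Sum>n<N. \<bar>a n\<bar>) \<le> C" by simp
  qed simp
qed

lemma repr:
  assumes x: "x \<in> c0"
  shows "(\<lambda>n. a n * apply_bcontfun x n) sums \<phi> x"
proof -
  obtain C where C: "C \<ge> 0" "\<And>x. x \<in> c0 \<Longrightarrow> \<bar>\<phi> x\<bar> \<le> C * norm x" using bound_ex by blast
  have xt: "(\<lambda>n. apply_bcontfun x n) \<longlonglongrightarrow> 0" using x unfolding c0_def by simp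
  have nt: "(\<lambda>N. norm (x - fs N (apply_bcontfun x))) \<longlonglongrightarrow> 0"
  proof (rule LIMSEQ_I)
    fix r :: real assume r: "r > 0"
    then have "r/2 > 0" by simp
    from LIMSEQ_D[OF xt this] obtain N0 where N0: "\<And>n. n \<ge> N0 \<Longrightarrow> \<bar>apply_bcontfun x n\<bar> < r/2"
      by auto
    show "\<exists>no. \<forall>N\<ge>no. norm (norm (x - fs N (apply_bcontfun x)) - 0) < r"
    proof (intro exI allI impI)
      fix N assume "N \<ge> N0"
      have "norm (x - fs N (apply_bcontfun x)) \<le> r/2"
        apply (rule norm_bound)
        using N0 \<open>N \<ge> N0\<close> r by (auto simp: fs_apply less_imp_le)
      then show "norm (norm (x - fs N (apply_bcontfun x)) - 0) < r" using r by simp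
    qed
  qed
  have "(\<lambda>N. \<phi> x - \<phi> (fs N (apply_bcontfun x))) \<longlonglongrightarrow> 0"
  proof (rule tendsto_0_le[OF nt, where K=C], rule always_eventually, rule allI)
    fix N
    have "norm (\<phi> x - \<phi> (fs N (apply_bcontfun x))) = \<bar>\<phi> (x - fs N (apply_bcontfun x))\<bar>"
      using diff[OF x fs_c0] by simp
    also have "\<dots> \<le> C * norm (x - fs N (apply_bcontfun x))"
      using C(2)[OF c0_diff[OF x fs_c0]] .
    finally show "norm (\<phi> x - \<phi> (fs N (apply_bcontfun x))) \<le> norm (norm (x - fs N (apply_bcontfun x))) * C"
      by (simp add: mult.commute)
  qed
  then have "(\<lambda>N. \<phi> x - (\<phi> x - \<phi> (fs N (apply_bcontfun x)))) \<longlonglongrightarrow> \<phi> x - 0"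
    by (intro tendsto_diff tendsto_const)
  then have "(\<lambda>N. \<phi> (fs N (apply_bcontfun x))) \<longlonglongrightarrow> \<phi> x"
    by simp
  then show ?thesis unfolding sums_def fs_eval by (simp add: mult.commute)
qed

end

abbreviation "W \<equiv> weak_topology_on c0"

lemma blf_zero: "bounded_linear_functional_on c0 (\<lambda>_. 0)"
  unfolding bounded_linear_functional_on_def by (auto intro!: exI[of _ 0])

lemma W_topspace: "topspace W = c0"
proof -
  have "c0 \<in> {c0 \<inter> \<phi> -` U | \<phi> U. bounded_linear_functional_on c0 \<phi> \<and> open U}"
    using blf_zero by (auto intro!: exI[of _ "\<lambda>_. 0"] exI[of _ UNIV])
  then show ?thesis unfolding weak_topology_on_def topology_generated_by_topspace by blast
qed

lemma blf_cont:
  assumes "bounded_linear_functional_on c0 \<phi>"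
  shows "continuous_map W euclideanreal \<phi>"
  unfolding continuous_map_def
proof (intro conjI allI impI)
  show "\<phi> \<in> topspace W \<rightarrow> topspace euclideanreal" by simp
  fix U :: "real set" assume "openin euclideanreal U"
  then have "open U" by simp
  then have "c0 \<inter> \<phi> -` U \<in> {c0 \<inter> \<phi> -` U | \<phi> U. bounded_linear_functional_on c0 \<phi> \<and> open U}"
    using assms by blast
  then have "openin W (c0 \<inter> \<phi> -` U)"
    unfolding weak_topology_on_def by (rule topology_generated_by_Basis)
  moreover have "{x \<in> topspace W. \<phi> x \<in> U} = c0 \<inter> \<phi> -` U" using W_topspace by auto
  ultimately show "openin W {x \<in> topspace W. \<phi> x \<in> U}" by simp
qed

lemma abs_coord_le: "\<bar>apply_bcontfun x n\<bar> \<le> norm x"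
  using norm_bounded[of x n] by simp

lemma coord_blf: "bounded_linear_functional_on c0 (\<lambda>w. apply_bcontfun w n)"
  unfolding bounded_linear_functional_on_def
  using abs_coord_le[of _ n] by (auto intro!: exI[of _ 1])

lemma coord_cont: "continuous_map W euclideanreal (\<lambda>w. apply_bcontfun w n)"
  by (rule blf_cont[OF coord_blf])

lemma W_Hausdorff: "Hausdorff_space W"
  unfolding Hausdorff_space_def
proof (intro allI impI)
  fix x y assume H: "x \<in> topspace W \<and> y \<in> topspace W \<and> x \<noteq> y"
  then obtain n where n: "apply_bcontfun x n \<noteq> apply_bcontfun y n"
    using bcontfun_eqI by blast
  define r where "r = \<bar>apply_bcontfun x n - apply_bcontfun y n\<bar> / 2"
  have r: "r > 0" using n unfolding r_def by simp
  let ?U = "{z \<in> topspace W. apply_bcontfun z n \<in> ball (apply_bcontfun x n) r}"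
  let ?V = "{z \<in> topspace W. apply_bcontfun z n \<in> ball (apply_bcontfun y n) r}"
  have "openin W ?U" "openin W ?V"
    by (rule openin_continuous_map_preimage[OF coord_cont], simp)+
  moreover have "x \<in> ?U" "y \<in> ?V" using H r by auto
  moreover have "disjnt ?U ?V"
    unfolding disjnt_def r_def by (auto simp: dist_real_def ball_def) (smt (verit))
  ultimately show "\<exists>U V. openin W U \<and> openin W V \<and> x \<in> U \<and> y \<in> V \<and> disjnt U V"
    by blast
qed

definition "N0 = {w \<in> c0. \<forall>n. 0 \<le> apply_bcontfun w n}"

lemma N0_closed: "closedin W N0"
proof -
  have c: "closedin W {z \<in> topspace W. 0 \<le> apply_bcontfun z n}" for n
    using closedin_continuous_map_preimage[OF coord_cont, of "{0..}" n] by simp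
  have "N0 = topspace W \<inter> (\<Inter>n. {z \<in> topspace W. 0 \<le> apply_bcontfun z n})"
    unfolding N0_def W_topspace by auto
  also have "closedin W (topspace W \<inter> (\<Inter>n. {z \<in> topspace W. 0 \<le> apply_bcontfun z n}))"
    using c by (intro closedin_Int closedin_topspace closedin_Inter) auto
  finally show ?thesis .
qed

abbreviation "TT \<equiv> product_topology (\<lambda>_::nat. top_of_set {-1..1::real}) UNIV"
abbreviation "XX \<equiv> prod_topology (subtopology W N0) TT"

definition Phi :: "(nat \<Rightarrow>\<^sub>C real) \<times> (nat \<Rightarrow> real) \<Rightarrow> (nat \<Rightarrow>\<^sub>C real)" where
  "Phi z = mk (\<lambda>n. snd z n * apply_bcontfun (fst z) n)"

lemma XX_topspace: "topspace XX = N0 \<times> (PiE UNIV (\<lambda>_. {-1..1}))"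
  using W_topspace N0_def by (auto simp: topspace_prod_topology)

lemma XX_memD:
  assumes "z \<in> topspace XX"
  shows "fst z \<in> c0" "\<And>n. 0 \<le> apply_bcontfun (fst z) n" "\<And>n. \<bar>snd z n\<bar> \<le> 1"
  using assms unfolding XX_topspace N0_def by (auto simp: PiE_def Pi_def abs_le_iff)

lemma Phi_apply:
  assumes "z \<in> topspace XX"
  shows "apply_bcontfun (Phi z) = (\<lambda>n. snd z n * apply_bcontfun (fst z) n)"
  unfolding Phi_def
proof (rule mk_apply[where b="norm (fst z)"])
  fix n
  have "\<bar>snd z n * apply_bcontfun (fst z) n\<bar> \<le> 1 * \<bar>apply_bcontfun (fst z) n\<bar>"
    unfolding abs_mult by (rule mult_right_mono[OF XX_memD(3)[OF assms]]) simp
  also have "\<dots> \<le> norm (fst z)" using norm_bounded[of "fst z" n] by simp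
  finally show "\<bar>snd z n * apply_bcontfun (fst z) n\<bar> \<le> norm (fst z)" .
qed

lemma Phi_c0:
  assumes "z \<in> topspace XX"
  shows "Phi z \<in> c0"
proof -
  have t: "(\<lambda>n. apply_bcontfun (fst z) n) \<longlonglongrightarrow> 0"
    using XX_memD(1)[OF assms] unfolding c0_def by simp
  have t2: "(\<lambda>n. \<bar>apply_bcontfun (fst z) n\<bar>) \<longlonglongrightarrow> 0"
    by (rule tendsto_rabs_zero[OF t])
  have b: "norm (snd z n * apply_bcontfun (fst z) n) \<le> \<bar>apply_bcontfun (fst z) n\<bar>" for n
  proof -
    have "\<bar>snd z n\<bar> * \<bar>apply_bcontfun (fst z) n\<bar> \<le> 1 * \<bar>apply_bcontfun (fst z) n\<bar>"
      by (rule mult_right_mono[OF XX_memD(3)[OF assms] abs_ge_zero])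
    then show ?thesis by (simp add: abs_mult)
  qed
  have "(\<lambda>n. snd z n * apply_bcontfun (fst z) n) \<longlonglongrightarrow> 0"
    by (rule Lim_null_comparison[OF always_eventually t2]) (use b in blast)
  then have "apply_bcontfun (Phi z) \<longlonglongrightarrow> 0" by (subst Phi_apply[OF assms])
  then show ?thesis unfolding c0_def by simp
qed

lemma cont_fst_coord: "continuous_map XX euclideanreal (\<lambda>z. apply_bcontfun (fst z) n)"
  using continuous_map_compose[OF continuous_map_fst continuous_map_from_subtopology[OF coord_cont]]
  by (simp add: o_def)

lemma cont_snd_coord: "continuous_map XX euclideanreal (\<lambda>z. snd z n)"
proof -
  have "continuous_map TT (top_of_set {-1..1}) (\<lambda>x. x n)"
    by (rule continuous_map_product_projection) simp
  then have "continuous_map TT euclideanreal (\<lambda>x. x n)"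
    using continuous_map_in_subtopology by blast
  then show ?thesis
    using continuous_map_compose[OF continuous_map_snd] by (simp add: o_def)
qed

context blf
begin

lemma summ_bounded:
  assumes "\<And>m. \<bar>g m\<bar> \<le> B"
  shows "summable (\<lambda>m. \<bar>a m * g m\<bar>)"
proof (rule summable_comparison_test'[where g="\<lambda>m. \<bar>a m\<bar> * B"])
  show "summable (\<lambda>m. \<bar>a m\<bar> * B)" by (rule summable_mult2[OF summable_a])
  fix m show "norm \<bar>a m * g m\<bar> \<le> \<bar>a m\<bar> * B"
    unfolding abs_mult by (simp add: assms mult_left_mono)
qed

definition "psi N w = (\<Sum>m. \<bar>a (m + N)\<bar> * apply_bcontfun w (m + N))"

lemma summ_w: "summable (\<lambda>m. \<bar>a (m + N)\<bar> * apply_bcontfun w (m + N))"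
proof -
  have "summable (\<lambda>m. \<bar>a m * apply_bcontfun w m\<bar>)"
    by (rule summ_bounded[where B="norm w"]) (rule abs_coord_le)
  then have "summable (\<lambda>m. \<bar>a m\<bar> * apply_bcontfun w m)"
    by (rule summable_comparison_test'[where N=0]) (simp add: abs_mult)
  from summable_ignore_initial_segment[OF this, of N] show ?thesis by simp
qed

lemma psi_blf: "bounded_linear_functional_on c0 (psi N)"
  unfolding bounded_linear_functional_on_def
proof (intro conjI ballI allI)
  fix x y :: "nat \<Rightarrow>\<^sub>C real"
  show "psi N (x + y) = psi N x + psi N y"
    unfolding psi_def using suminf_add[OF summ_w[of N x] summ_w[of N y]]
    by (simp add: distrib_left)
next
  fix c and x :: "nat \<Rightarrow>\<^sub>C real"
  show "psi N (c *\<^sub>R x) = c * psi N x"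
    unfolding psi_def using suminf_mult[OF summ_w[of N x], of c]
    by (simp add: algebra_simps)
next
  have sa: "summable (\<lambda>m. \<bar>a (m + N)\<bar>)"
    using summable_ignore_initial_segment[OF summable_a, of N] by simp
  show "\<exists>C. \<forall>x\<in>c0. \<bar>psi N x\<bar> \<le> C * norm x"
  proof (intro exI ballI)
    fix x :: "nat \<Rightarrow>\<^sub>C real"
    have "\<bar>psi N x\<bar> \<le> (\<Sum>m. \<bar>a (m + N)\<bar> * norm x)"
      unfolding psi_def real_norm_def[symmetric]
      by (rule norm_suminf_le) (auto simp: abs_mult intro: mult_left_mono abs_coord_le summable_mult2[OF sa])
    also have "\<dots> = (\<Sum>m. \<bar>a (m + N)\<bar>) * norm x" by (rule suminf_mult2[OF sa, symmetric])
    finally show "\<bar>psi N x\<bar> \<le> (\<Sum>m. \<bar>a (m + N)\<bar>) * norm x" .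
  qed
qed

lemma h_split:
  assumes z: "z \<in> topspace XX"
  shows "\<bar>\<phi> (Phi z) - (\<Sum>n<N. a n * (snd z n * apply_bcontfun (fst z) n))\<bar> \<le> psi N (fst z)"
proof -
  let ?f = "\<lambda>n. a n * (snd z n * apply_bcontfun (fst z) n)"
  have s: "?f sums \<phi> (Phi z)" using repr[OF Phi_c0[OF z]] Phi_apply[OF z] by simp
  have sf: "summable ?f" using s by (simp add: sums_iff)
  have "\<phi> (Phi z) = (\<Sum>m. ?f (m + N)) + (\<Sum>n<N. ?f n)"
    using suminf_split_initial_segment[OF sf, of N] s by (simp add: sums_iff)
  then have "\<bar>\<phi> (Phi z) - (\<Sum>n<N. ?f n)\<bar> = \<bar>\<Sum>m. ?f (m + N)\<bar>" by simp
  also have "\<dots> \<le> psi N (fst z)"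
    unfolding psi_def
  proof -
    have "norm (\<Sum>m. ?f (m + N)) \<le> (\<Sum>m. \<bar>a (m + N)\<bar> * apply_bcontfun (fst z) (m + N))"
    proof (rule norm_suminf_le[OF _ summ_w])
      fix m
      have "\<bar>snd z (m+N)\<bar> * apply_bcontfun (fst z) (m+N) \<le> 1 * apply_bcontfun (fst z) (m+N)"
        by (rule mult_right_mono[OF XX_memD(3)[OF z] XX_memD(2)[OF z]])
      then have le: "\<bar>snd z (m+N)\<bar> * apply_bcontfun (fst z) (m+N) \<le> apply_bcontfun (fst z) (m+N)"
        by simp
      have "norm (?f (m + N)) = \<bar>a (m + N)\<bar> * (\<bar>snd z (m+N)\<bar> * apply_bcontfun (fst z) (m+N))"
        using XX_memD(2)[OF z, of "m+N"] by (simp add: abs_mult)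
      also have "\<dots> \<le> \<bar>a (m + N)\<bar> * apply_bcontfun (fst z) (m + N)"
        by (rule mult_left_mono[OF le]) simp
      finally show "norm (?f (m + N)) \<le> \<bar>a (m + N)\<bar> * apply_bcontfun (fst z) (m + N)" .
    qed
    then show "\<bar>\<Sum>m. ?f (m + N)\<bar> \<le> (\<Sum>m. \<bar>a (m + N)\<bar> * apply_bcontfun (fst z) (m + N))"
      by simp
  qed
  finally show ?thesis .
qed

lemma psi_nonneg: "z \<in> topspace XX \<Longrightarrow> psi N (fst z) \<ge> 0"
  unfolding psi_def using XX_memD(2) by (intro suminf_nonneg[OF summ_w]) auto

lemma h_cont: "continuous_map XX euclideanreal (\<lambda>z. \<phi> (Phi z))"
  unfolding continuous_map_eq_topcontinuous_at topcontinuous_at_def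
proof (intro ballI conjI allI impI)
  fix z0 assume z0: "z0 \<in> topspace XX"
  show "z0 \<in> topspace XX" by fact
  show "(\<lambda>z. \<phi> (Phi z)) \<in> topspace XX \<rightarrow> topspace euclideanreal" by simp
  fix V assume "openin euclideanreal V \<and> \<phi> (Phi z0) \<in> V"
  then obtain e where e: "e > 0" "ball (\<phi> (Phi z0)) e \<subseteq> V"
    by (auto simp: open_contains_ball)
  have "summable (\<lambda>m. \<bar>a m\<bar> * apply_bcontfun (fst z0) m)"
    using summ_w[of 0 "fst z0"] by simp
  from suminf_exist_split[OF _ this, of "e/4"] e
  obtain N where N: "norm (\<Sum>i. \<bar>a (i + N)\<bar> * apply_bcontfun (fst z0) (i + N)) < e/4"
    by auto
  then have psiN: "psi N (fst z0) < e/4" unfolding psi_def by simp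
  define g where "g z = (\<Sum>n<N. a n * (snd z n * apply_bcontfun (fst z) n))" for z
  define q where "q z = \<bar>g z - g z0\<bar> + \<bar>psi N (fst z) - psi N (fst z0)\<bar>" for z
  have gc: "continuous_map XX euclideanreal g"
    unfolding g_def
    by (intro continuous_map_sum continuous_map_real_mult continuous_map_const[THEN iffD2]
          cont_fst_coord cont_snd_coord) auto
  have pc: "continuous_map XX euclideanreal (\<lambda>z. psi N (fst z))"
    using continuous_map_compose[OF continuous_map_fst continuous_map_from_subtopology[OF blf_cont[OF psi_blf]]]
    by (simp add: o_def)
  have qc: "continuous_map XX euclideanreal q"
    unfolding q_def
    by (intro continuous_map_add continuous_map_real_abs continuous_map_diff gc pc continuous_map_const[THEN iffD2]) auto
  define U where "U = {z \<in> topspace XX. q z \<in> {..<e/4}}"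
  have "openin XX U" unfolding U_def by (rule openin_continuous_map_preimage[OF qc]) simp
  moreover have "z0 \<in> U" unfolding U_def q_def using z0 e by simp
  moreover have "\<phi> (Phi z) \<in> V" if z: "z \<in> U" for z
  proof -
    have zt: "z \<in> topspace XX" and qz: "q z < e/4" using z unfolding U_def by auto
    have "\<bar>\<phi> (Phi z) - \<phi> (Phi z0)\<bar> < e"
      using h_split[OF zt, of N] h_split[OF z0, of N] qz psiN psi_nonneg[OF zt, of N]
      unfolding q_def g_def by linarith
    then show ?thesis using e(2) by (auto simp: dist_real_def)
  qed
  ultimately show "\<exists>U. openin XX U \<and> z0 \<in> U \<and> (\<forall>y\<in>U. \<phi> (Phi y) \<in> V)" by blast
qed

end

lemma Phi_cont: "continuous_map XX W Phi"
proof -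
  have "continuous_map XX (topology_generated_by {c0 \<inter> \<phi> -` U | \<phi> U. bounded_linear_functional_on c0 \<phi> \<and> open U}) Phi"
  proof (rule continuous_on_generated_topo)
    fix U assume "U \<in> {c0 \<inter> \<phi> -` U | \<phi> U. bounded_linear_functional_on c0 \<phi> \<and> open U}"
    then obtain \<phi> V where U: "U = c0 \<inter> \<phi> -` V" and b: "bounded_linear_functional_on c0 \<phi>" and "open V"
      by blast
    interpret blf \<phi> by (rule blf.intro[OF b])
    have "Phi -` U \<inter> topspace XX = {z \<in> topspace XX. \<phi> (Phi z) \<in> V}"
      using U Phi_c0 by blast
    then show "openin XX (Phi -` U \<inter> topspace XX)"
      using openin_continuous_map_preimage[OF h_cont] \<open>open V\<close> by simp
  next
    have E: "\<Union> {c0 \<inter> \<phi> -` U | \<phi> U. bounded_linear_functional_on c0 \<phi> \<and> open U} = c0"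
      using W_topspace unfolding weak_topology_on_def topology_generated_by_topspace .
    show "Phi ` topspace XX \<subseteq> \<Union> {c0 \<inter> \<phi> -` U | \<phi> U. bounded_linear_functional_on c0 \<phi> \<and> open U}"
      unfolding E using Phi_c0 by blast
  qed
  then show ?thesis unfolding weak_topology_on_def .
qed

lemma c0_dom:
  assumes rwc: "relatively_weakly_compact_in c0 B"
    and pos: "\<And>b n. b \<in> B \<Longrightarrow> 0 \<le> apply_bcontfun b n"
    and Cc0: "C \<subseteq> c0"
    and dom: "\<And>c. c \<in> C \<Longrightarrow> \<exists>b\<in>B. \<forall>n. \<bar>apply_bcontfun c n\<bar> \<le> apply_bcontfun b n"
  shows "relatively_weakly_compact_in c0 C"
proof -
  define K where "K = W closure_of B"
  have Bc0: "B \<subseteq> c0" and cK: "compactin W K"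
    using rwc unfolding relatively_weakly_compact_in_def K_def by auto
  have BN0: "B \<subseteq> N0" using Bc0 pos unfolding N0_def by auto
  have KN0: "K \<subseteq> N0" unfolding K_def by (rule closure_of_minimal[OF BN0 N0_closed])
  have BK: "B \<subseteq> K" unfolding K_def by (rule closure_of_subset) (use Bc0 W_topspace in simp)
  have cK': "compactin (subtopology W N0) K" using cK KN0 by (simp add: compactin_subtopology)
  have cI: "compact_space (top_of_set {-1..1::real})"
    by (rule compact_space_subtopology) (simp add: compactin_euclidean_iff)
  have cT: "compact_space TT"
    unfolding compact_space_product_topology using cI by blast
  have cT': "compactin TT (topspace TT)" using cT unfolding compact_space_def .
  have cKT: "compactin XX (K \<times> topspace TT)"
    using cK' cT' compactin_Times[of "subtopology W N0" TT K "topspace TT"] by blast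
  define D where "D = Phi ` (K \<times> topspace TT)"
  have cD: "compactin W D" unfolding D_def by (rule image_compactin[OF cKT Phi_cont])
  have clD: "closedin W D" by (rule compactin_imp_closedin[OF W_Hausdorff cD])
  have CD: "C \<subseteq> D"
  proof
    fix c assume c: "c \<in> C"
    then obtain b where b: "b \<in> B" "\<And>n. \<bar>apply_bcontfun c n\<bar> \<le> apply_bcontfun b n"
      using dom by blast
    define t where "t n = (if apply_bcontfun b n = 0 then 0 else apply_bcontfun c n / apply_bcontfun b n)" for n
    have t1: "t n \<in> {-1..1}" for n
    proof (cases "apply_bcontfun b n = 0")
      case True then show ?thesis by (simp add: t_def)
    next
      case False
      then have bp: "apply_bcontfun b n > 0" using pos[OF b(1), of n] by simp
      have "\<bar>apply_bcontfun c n / apply_bcontfun b n\<bar> = \<bar>apply_bcontfun c n\<bar> / apply_bcontfun b n"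
        using bp by (simp add: abs_divide)
      also have "\<dots> \<le> 1" using b(2)[of n] bp by (simp add: divide_le_eq_1_pos)
      finally have "\<bar>apply_bcontfun c n / apply_bcontfun b n\<bar> \<le> 1" .
      moreover have "t n = apply_bcontfun c n / apply_bcontfun b n" using False by (simp add: t_def)
      ultimately show ?thesis unfolding atLeastAtMost_iff by linarith
    qed
    have "t \<in> PiE UNIV (\<lambda>_. {-1..1})" using t1 by (auto simp: PiE_iff)
    then have tT: "t \<in> topspace TT" by simp
    have bK: "b \<in> K" using BK b(1) by blast
    have z: "(b, t) \<in> topspace XX" unfolding XX_topspace using bK KN0 \<open>t \<in> PiE UNIV (\<lambda>_. {-1..1})\<close> by blast
    have "Phi (b, t) = c"
    proof (rule bcontfun_eqI)
      fix n
      show "apply_bcontfun (Phi (b, t)) n = apply_bcontfun c n"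
      proof (cases "apply_bcontfun b n = 0")
        case True
        then have "apply_bcontfun c n = 0" using b(2)[of n] by simp
        then show ?thesis using True by (simp add: Phi_apply[OF z] t_def)
      next
        case False then show ?thesis by (simp add: Phi_apply[OF z] t_def)
      qed
    qed
    then show "c \<in> D" unfolding D_def using bK tT by (intro image_eqI[of _ _ "(b, t)"]) auto
  qed
  have "W closure_of C \<subseteq> D" by (rule closure_of_minimal[OF CD clD])
  then have "compactin W (W closure_of C)"
    by (rule closed_compactin[OF cD _ closedin_closure_of])
  then show ?thesis unfolding relatively_weakly_compact_in_def using Cc0 by simp
qed

lemma pos_neg_decomp:
  fixes z :: "'a::banach_lattice"
  shows "sup z 0 - sup (-z) 0 = z"
proof -
  have "sup (-z) 0 = - inf z 0" using neg_inf_eq_sup[of z 0] by simp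
  then have "sup z 0 - sup (-z) 0 = sup z 0 + inf z 0" by simp
  also have "\<dots> = z + 0" using add_eq_inf_sup[of z 0] by (metis add.right_neutral)
  finally show ?thesis by simp
qed

lemma riesz_pos:
  fixes x y w :: "'a::banach_lattice"
  assumes "0 \<le> x" "0 \<le> y" "0 \<le> w" "w \<le> x + y"
  shows "\<exists>w1 w2. w = w1 + w2 \<and> 0 \<le> w1 \<and> w1 \<le> x \<and> 0 \<le> w2 \<and> w2 \<le> y"
proof (intro exI conjI)
  show "w = inf w x + (w - inf w x)" by (metis add.commute diff_add_cancel)
  show "0 \<le> inf w x" using assms by simp
  show "inf w x \<le> x" by simp
  show "0 \<le> w - inf w x" by (rule diff_ge_0_iff_ge[THEN iffD2]) (rule inf_le1)
  have "w - inf w x = w + sup (-w) (-x)" by (rule diff_inf_eq_sup)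
  also have "\<dots> = sup (w + -w) (w + -x)" by (rule add_sup_distrib_left)
  also have "\<dots> = sup 0 (w - x)" by simp
  also have "\<dots> \<le> y"
  proof (rule sup_least)
    show "0 \<le> y" by fact
    show "w - x \<le> y" using assms(4) by (simp add: diff_le_eq add.commute)
  qed
  finally show "w - inf w x \<le> y" .
qed

lemma abs_diff_le_sup:
  fixes a b :: "'a::banach_lattice"
  assumes "0 \<le> a" "0 \<le> b"
  shows "\<bar>a - b\<bar> \<le> sup a b"
proof -
  have "\<bar>a - b\<bar> = sup (a - b) (-(a - b))" by (rule abs_lattice)
  also have "\<dots> \<le> sup a b"
  proof (rule sup_least)
    have "a - b \<le> a" using assms(2) by simp
    then show "a - b \<le> sup a b" using sup_ge1 order.trans by blast
    have "-(a - b) = b - a" by simp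
    also have "b - a \<le> b" using assms(1) by simp
    finally show "-(a - b) \<le> sup a b" using sup_ge2 order.trans by blast
  qed
  finally show ?thesis .
qed

lemma riesz:
  fixes x y z :: "'a::banach_lattice"
  assumes "0 \<le> x" "0 \<le> y" "\<bar>z\<bar> \<le> x + y"
  shows "\<exists>u v. z = u + v \<and> \<bar>u\<bar> \<le> x \<and> \<bar>v\<bar> \<le> y"
proof -
  have p0: "0 \<le> sup z 0" and n0: "0 \<le> sup (-z) 0" by simp_all
  have "sup z 0 \<le> \<bar>z\<bar>" by (intro sup_least abs_ge_self abs_ge_zero)
  then have p1: "sup z 0 \<le> x + y" using assms(3) by (rule order.trans)
  have "sup (-z) 0 \<le> \<bar>z\<bar>" by (intro sup_least abs_ge_minus_self abs_ge_zero)
  then have n1: "sup (-z) 0 \<le> x + y" using assms(3) by (rule order.trans)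
  obtain a1 a2 where a: "sup z 0 = a1 + a2" "0 \<le> a1" "a1 \<le> x" "0 \<le> a2" "a2 \<le> y"
    using riesz_pos[OF assms(1,2) p0 p1] by blast
  obtain b1 b2 where b: "sup (-z) 0 = b1 + b2" "0 \<le> b1" "b1 \<le> x" "0 \<le> b2" "b2 \<le> y"
    using riesz_pos[OF assms(1,2) n0 n1] by blast
  show ?thesis
  proof (intro exI conjI)
    have "z = sup z 0 - sup (-z) 0" by (rule pos_neg_decomp[symmetric])
    also have "\<dots> = (a1 - b1) + (a2 - b2)" using a(1) b(1) by (simp add: algebra_simps)
    finally show "z = (a1 - b1) + (a2 - b2)" .
    show "\<bar>a1 - b1\<bar> \<le> x"
      using abs_diff_le_sup[OF a(2) b(2)] a(3) b(3) by (meson le_sup_iff order.trans)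
    show "\<bar>a2 - b2\<bar> \<le> y"
      using abs_diff_le_sup[OF a(4) b(4)] a(5) b(5) by (meson le_sup_iff order.trans)
  qed
qed

lemma scaleR_sup:
  fixes a b :: "'a::banach_lattice"
  assumes "0 \<le> c"
  shows "c *\<^sub>R sup a b = sup (c *\<^sub>R a) (c *\<^sub>R b)"
proof (cases "c = 0")
  case True then show ?thesis by simp
next
  case False
  then have c: "0 < c" using assms by simp
  show ?thesis
  proof (rule order.antisym)
    have "sup a b \<le> inverse c *\<^sub>R sup (c *\<^sub>R a) (c *\<^sub>R b)"
    proof (rule sup_least)
      have "a = inverse c *\<^sub>R (c *\<^sub>R a)" using c by simp
      also have "\<dots> \<le> inverse c *\<^sub>R sup (c *\<^sub>R a) (c *\<^sub>R b)"
        by (rule scaleR_left_mono) (use c in simp_all)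
      finally show "a \<le> inverse c *\<^sub>R sup (c *\<^sub>R a) (c *\<^sub>R b)" .
      have "b = inverse c *\<^sub>R (c *\<^sub>R b)" using c by simp
      also have "\<dots> \<le> inverse c *\<^sub>R sup (c *\<^sub>R a) (c *\<^sub>R b)"
        by (rule scaleR_left_mono) (use c in simp_all)
      finally show "b \<le> inverse c *\<^sub>R sup (c *\<^sub>R a) (c *\<^sub>R b)" .
    qed
    then have "c *\<^sub>R sup a b \<le> c *\<^sub>R (inverse c *\<^sub>R sup (c *\<^sub>R a) (c *\<^sub>R b))"
      by (rule scaleR_left_mono) (use c in simp)
    then show "c *\<^sub>R sup a b \<le> sup (c *\<^sub>R a) (c *\<^sub>R b)" using c by simp
    show "sup (c *\<^sub>R a) (c *\<^sub>R b) \<le> c *\<^sub>R sup a b"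
      by (intro sup_least scaleR_left_mono sup_ge1 sup_ge2 assms)
  qed
qed

lemma abs_scaleR_pos:
  fixes y :: "'a::banach_lattice"
  assumes "0 \<le> c"
  shows "\<bar>c *\<^sub>R y\<bar> = c *\<^sub>R \<bar>y\<bar>"
proof -
  have "\<bar>c *\<^sub>R y\<bar> = sup (c *\<^sub>R y) (c *\<^sub>R (-y))" by (simp add: abs_lattice)
  also have "\<dots> = c *\<^sub>R sup y (-y)" by (rule scaleR_sup[OF assms, symmetric])
  also have "\<dots> = c *\<^sub>R \<bar>y\<bar>" by (simp add: abs_lattice)
  finally show ?thesis .
qed

context
  fixes f :: "'a::banach_lattice \<Rightarrow>\<^sub>L real"
begin

lemma norm_le_pos:
  fixes x y :: 'a
  assumes "\<bar>y\<bar> \<le> x"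
  shows "norm y \<le> norm x"
proof -
  have "0 \<le> x" using assms abs_ge_zero order.trans by blast
  then have "\<bar>x\<bar> = x" by (rule abs_of_nonneg)
  then show ?thesis using assms norm_lattice by metis
qed

abbreviation "SS x \<equiv> {blinfun_apply f y | y. \<bar>y\<bar> \<le> x}"

lemma SS_bdd: "bdd_above (SS x)"
proof (rule bdd_aboveI)
  fix r assume "r \<in> SS x"
  then obtain y where y: "r = blinfun_apply f y" "\<bar>y\<bar> \<le> x" by blast
  have "r \<le> norm (blinfun_apply f y)" using y(1) by simp
  also have "\<dots> \<le> norm f * norm y" by (rule norm_blinfun)
  also have "\<dots> \<le> norm f * norm x" by (rule mult_left_mono[OF norm_le_pos[OF y(2)]]) simp
  finally show "r \<le> norm f * norm x" .
qed

lemma SS_ne: "0 \<le> x \<Longrightarrow> SS x \<noteq> {}"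
proof -
  assume "0 \<le> x"
  then have "\<bar>0::'a\<bar> \<le> x" by simp
  then have "blinfun_apply f 0 \<in> SS x" by blast
  then show ?thesis by blast
qed

lemma dap_upper: "\<bar>y\<bar> \<le> x \<Longrightarrow> blinfun_apply f y \<le> dual_abs_pos f x"
  unfolding dual_abs_pos_def by (rule cSup_upper[OF _ SS_bdd]) blast

lemma dap_abs_upper: "\<bar>y\<bar> \<le> x \<Longrightarrow> \<bar>blinfun_apply f y\<bar> \<le> dual_abs_pos f x"
proof -
  assume a: "\<bar>y\<bar> \<le> x"
  then have "\<bar>-y\<bar> \<le> x" by simp
  from dap_upper[OF a] dap_upper[OF this] show ?thesis
    by (simp add: blinfun.minus_right)
qed

lemma dap_least: "0 \<le> x \<Longrightarrow> (\<And>y. \<bar>y\<bar> \<le> x \<Longrightarrow> blinfun_apply f y \<le> M) \<Longrightarrow> dual_abs_pos f x \<le> M"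
  unfolding dual_abs_pos_def by (rule cSup_least[OF SS_ne]) auto

lemma dap_nonneg: "0 \<le> x \<Longrightarrow> 0 \<le> dual_abs_pos f x"
  using dap_upper[of 0 x] by simp

lemma dap_bound: "0 \<le> x \<Longrightarrow> dual_abs_pos f x \<le> norm f * norm x"
proof (rule dap_least)
  fix y assume y: "\<bar>y\<bar> \<le> x"
  have "blinfun_apply f y \<le> norm (blinfun_apply f y)" by simp
  also have "\<dots> \<le> norm f * norm y" by (rule norm_blinfun)
  also have "\<dots> \<le> norm f * norm x" by (rule mult_left_mono[OF norm_le_pos[OF y]]) simp
  finally show "blinfun_apply f y \<le> norm f * norm x" .
qed

lemma dap_zero: "dual_abs_pos f 0 = 0"
proof -
  have "dual_abs_pos f 0 \<le> 0"
    by (rule dap_least) (auto simp: abs_le_zero_iff)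
  then show ?thesis using dap_nonneg[of 0] by simp
qed

lemma dap_add:
  assumes x: "0 \<le> x" and y: "0 \<le> y"
  shows "dual_abs_pos f (x + y) = dual_abs_pos f x + dual_abs_pos f y"
proof (rule order.antisym)
  have xy: "0 \<le> x + y" using x y by simp
  show "dual_abs_pos f (x + y) \<le> dual_abs_pos f x + dual_abs_pos f y"
  proof (rule dap_least[OF xy])
    fix z assume "\<bar>z\<bar> \<le> x + y"
    then obtain u v where uv: "z = u + v" "\<bar>u\<bar> \<le> x" "\<bar>v\<bar> \<le> y"
      using riesz[OF x y] by blast
    have "blinfun_apply f z = blinfun_apply f u + blinfun_apply f v"
      using uv(1) by (simp add: blinfun.add_right)
    also have "\<dots> \<le> dual_abs_pos f x + dual_abs_pos f y"
      by (intro add_mono dap_upper uv)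
    finally show "blinfun_apply f z \<le> dual_abs_pos f x + dual_abs_pos f y" .
  qed
  have key: "blinfun_apply f u + blinfun_apply f v \<le> dual_abs_pos f (x + y)"
    if "\<bar>u\<bar> \<le> x" "\<bar>v\<bar> \<le> y" for u v
  proof -
    have "\<bar>u + v\<bar> \<le> x + y"
      using abs_triangle_ineq[of u v] add_mono[OF that] order.trans by blast
    then have "blinfun_apply f (u + v) \<le> dual_abs_pos f (x + y)" by (rule dap_upper)
    then show ?thesis by (simp add: blinfun.add_right)
  qed
  have "dual_abs_pos f y \<le> dual_abs_pos f (x + y) - dual_abs_pos f x"
  proof (rule dap_least[OF y])
    fix v assume v: "\<bar>v\<bar> \<le> y"
    have "dual_abs_pos f x \<le> dual_abs_pos f (x + y) - blinfun_apply f v"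
    proof (rule dap_least[OF x])
      fix u assume "\<bar>u\<bar> \<le> x"
      from key[OF this v] show "blinfun_apply f u \<le> dual_abs_pos f (x + y) - blinfun_apply f v"
        by simp
    qed
    then show "blinfun_apply f v \<le> dual_abs_pos f (x + y) - dual_abs_pos f x" by simp
  qed
  then show "dual_abs_pos f x + dual_abs_pos f y \<le> dual_abs_pos f (x + y)" by simp
qed

lemma dap_scale:
  assumes x: "0 \<le> x" and c: "0 \<le> c"
  shows "dual_abs_pos f (c *\<^sub>R x) = c * dual_abs_pos f x"
proof (cases "c = 0")
  case True then show ?thesis by (simp add: dap_zero)
next
  case False
  then have c: "0 < c" using c by simp
  have cx: "0 \<le> c *\<^sub>R x" by (rule scaleR_nonneg_nonneg) (use c x in simp_all)
  show ?thesis
  proof (rule order.antisym)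
    show "dual_abs_pos f (c *\<^sub>R x) \<le> c * dual_abs_pos f x"
    proof (rule dap_least[OF cx])
      fix y assume y: "\<bar>y\<bar> \<le> c *\<^sub>R x"
      have "\<bar>inverse c *\<^sub>R y\<bar> = inverse c *\<^sub>R \<bar>y\<bar>" by (rule abs_scaleR_pos) (use c in simp)
      also have "\<dots> \<le> inverse c *\<^sub>R (c *\<^sub>R x)" by (rule scaleR_left_mono[OF y]) (use c in simp)
      also have "\<dots> = x" using c by simp
      finally have "blinfun_apply f (inverse c *\<^sub>R y) \<le> dual_abs_pos f x" by (rule dap_upper)
      then have "inverse c * blinfun_apply f y \<le> dual_abs_pos f x" by (simp add: blinfun.scaleR_right)
      then show "blinfun_apply f y \<le> c * dual_abs_pos f x" using c by (simp add: field_simps)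
    qed
    have "dual_abs_pos f x \<le> inverse c * dual_abs_pos f (c *\<^sub>R x)"
    proof (rule dap_least[OF x])
      fix u assume u: "\<bar>u\<bar> \<le> x"
      have "\<bar>c *\<^sub>R u\<bar> = c *\<^sub>R \<bar>u\<bar>" by (rule abs_scaleR_pos) (use c in simp)
      also have "\<dots> \<le> c *\<^sub>R x" by (rule scaleR_left_mono[OF u]) (use c in simp)
      finally have "blinfun_apply f (c *\<^sub>R u) \<le> dual_abs_pos f (c *\<^sub>R x)" by (rule dap_upper)
      then have "c * blinfun_apply f u \<le> dual_abs_pos f (c *\<^sub>R x)" by (simp add: blinfun.scaleR_right)
      then show "blinfun_apply f u \<le> inverse c * dual_abs_pos f (c *\<^sub>R x)" using c by (simp add: field_simps)
    qed
    then show "c * dual_abs_pos f x \<le> dual_abs_pos f (c *\<^sub>R x)" using c by (simp add: field_simps)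
  qed
qed

lemma da_pos: "0 \<le> x \<Longrightarrow> dual_abs f x = dual_abs_pos f x"
proof -
  assume x: "0 \<le> x"
  then have "sup x 0 = x" by (simp add: sup_absorb1)
  moreover have "sup (-x) 0 = 0" using x by (simp add: sup_absorb2)
  ultimately show ?thesis unfolding dual_abs_def by (simp add: dap_zero)
qed

lemma da_neg: "dual_abs f (-x) = - dual_abs f x"
  unfolding dual_abs_def by simp

lemma da_add: "dual_abs f (x + y) = dual_abs f x + dual_abs f y"
proof -
  let ?p = "\<lambda>z::'a. sup z 0" and ?n = "\<lambda>z::'a. sup (-z) 0"
  have gen: "a + (d + g) = b + (c + e)"
    if h: "a - b = x + y" "c - d = x" "e - g = y" for a b c d e g :: 'a
  proof -
    have "a = x + y + b" "c = x + d" "e = y + g" using h by (simp_all add: diff_eq_eq)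
    then show ?thesis by (simp add: algebra_simps)
  qed
  have e: "?p (x + y) + (?n x + ?n y) = ?n (x + y) + (?p x + ?p y)"
    by (rule gen[OF pos_neg_decomp pos_neg_decomp pos_neg_decomp])
  have P: "0 \<le> ?p z" "0 \<le> ?n z" for z by simp_all
  have "dual_abs_pos f (?p (x + y)) + (dual_abs_pos f (?n x) + dual_abs_pos f (?n y))
      = dual_abs_pos f (?n (x + y)) + (dual_abs_pos f (?p x) + dual_abs_pos f (?p y))"
    using arg_cong[OF e, of "dual_abs_pos f"]
    by (simp only: dap_add P add_nonneg_nonneg)
  then show ?thesis unfolding dual_abs_def by simp
qed

lemma da_scale_pos: "0 \<le> c \<Longrightarrow> dual_abs f (c *\<^sub>R x) = c * dual_abs f x"
proof -
  assume c: "0 \<le> c"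
  have "sup (c *\<^sub>R x) 0 = c *\<^sub>R sup x 0" using scaleR_sup[OF c, of x 0] by simp
  moreover have "sup (- (c *\<^sub>R x)) 0 = c *\<^sub>R sup (-x) 0" using scaleR_sup[OF c, of "-x" 0] by simp
  ultimately show ?thesis unfolding dual_abs_def
    by (simp add: dap_scale c right_diff_distrib)
qed

lemma da_scale: "dual_abs f (c *\<^sub>R x) = c * dual_abs f x"
proof (cases "0 \<le> c")
  case True then show ?thesis by (rule da_scale_pos)
next
  case False
  then have "0 \<le> -c" by simp
  have "dual_abs f (c *\<^sub>R x) = dual_abs f ((-c) *\<^sub>R (-x))" by simp
  also have "\<dots> = (-c) * dual_abs f (-x)" by (rule da_scale_pos) fact
  also have "\<dots> = c * dual_abs f x" by (simp add: da_neg)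
  finally show ?thesis .
qed

lemma da_bound: "\<bar>dual_abs f x\<bar> \<le> 2 * norm f * norm x"
proof -
  have a: "0 \<le> sup x 0" and b: "0 \<le> sup (-x) 0" by simp_all
  have "norm (sup x 0) \<le> norm x"
    by (rule norm_lattice) (simp only: abs_of_nonneg[OF a]; intro sup_least abs_ge_self abs_ge_zero)
  moreover have "norm (sup (-x) 0) \<le> norm x"
    by (rule norm_lattice) (simp only: abs_of_nonneg[OF b]; intro sup_least abs_ge_minus_self abs_ge_zero)
  moreover have "0 \<le> norm f" by simp
  ultimately have "norm f * norm (sup x 0) \<le> norm f * norm x" "norm f * norm (sup (-x) 0) \<le> norm f * norm x"
    by (simp_all add: mult_left_mono)
  then show ?thesis
    unfolding dual_abs_def
    using dap_bound[OF a] dap_bound[OF b] dap_nonneg[OF a] dap_nonneg[OF b] by linarith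
qed

end

theorem mainTheorem11:
  fixes A :: "'a::banach_lattice set"
  assumes "dual_lattice_weak_star_seq_cont TYPE('a)"
  shows "grothendieck_set (abs ` A) \<longleftrightarrow> grothendieck_set (sol A)"
proof
  assume G: "grothendieck_set (sol A)"
  show "grothendieck_set (abs ` A)"
    unfolding grothendieck_set_def
  proof (intro allI impI)
    fix T :: "'a \<Rightarrow> (nat \<Rightarrow>\<^sub>C real)"
    assume bl: "bounded_linear T \<and> range T \<subseteq> c0"
    then have r: "relatively_weakly_compact_in c0 (T ` sol A)"
      using G unfolding grothendieck_set_def by blast
    have sub: "abs ` A \<subseteq> sol A" unfolding sol_def by auto
    then have sub2: "T ` abs ` A \<subseteq> T ` sol A" by (rule image_mono)
    have c: "compactin W (W closure_of (T ` sol A))"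
      using r unfolding relatively_weakly_compact_in_def by blast
    have "compactin W (W closure_of (T ` abs ` A))"
      by (rule closed_compactin[OF c closure_of_mono[OF sub2] closedin_closure_of])
    moreover have "T ` abs ` A \<subseteq> c0" using bl by blast
    ultimately show "relatively_weakly_compact_in c0 (T ` abs ` A)"
      unfolding relatively_weakly_compact_in_def by blast
  qed
next
  assume G: "grothendieck_set (abs ` A)"
  show "grothendieck_set (sol A)"
    unfolding grothendieck_set_def
  proof (intro allI impI)
    fix T :: "'a \<Rightarrow> (nat \<Rightarrow>\<^sub>C real)"
    assume bl: "bounded_linear T \<and> range T \<subseteq> c0"
    then have blT: "bounded_linear T" and rT: "range T \<subseteq> c0" by auto
    obtain K where K: "K > 0" "\<And>x. norm (T x) \<le> norm x * K"
      using bounded_linear.pos_bounded[OF blT] by blast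
    define g where "g n x = apply_bcontfun (T x) n" for n x
    have blg: "bounded_linear (g n)" for n
    proof (rule bounded_linear_intro[where K=K])
      fix x y show "g n (x + y) = g n x + g n y"
        unfolding g_def by (simp add: linear_simps blT)
    next
      fix r x show "g n (r *\<^sub>R x) = r *\<^sub>R g n x"
        unfolding g_def by (simp add: linear_simps blT)
    next
      fix x
      have "norm (g n x) \<le> norm (T x)" unfolding g_def by (rule norm_bounded)
      then show "norm (g n x) \<le> norm x * K" using K(2)[of x] by linarith
    qed
    define F where "F n = Blinfun (g n)" for n
    have Fa: "blinfun_apply (F n) = g n" for n
      unfolding F_def by (rule bounded_linear_Blinfun_apply[OF blg])
    have nF: "norm (F n) \<le> K" for n
    proof (rule norm_blinfun_bound)
      show "0 \<le> K" using K by simp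
      fix x
      have "norm (g n x) \<le> norm (T x)" unfolding g_def by (rule norm_bounded)
      then show "norm (blinfun_apply (F n) x) \<le> K * norm x" using K(2)[of x] Fa
        by (simp add: mult.commute)
    qed
    have wsn: "weak_star_null F"
      unfolding weak_star_null_def
    proof
      fix x
      have "T x \<in> c0" using rT by blast
      then show "(\<lambda>n. blinfun_apply (F n) x) \<longlonglongrightarrow> 0"
        unfolding c0_def Fa g_def by simp
    qed
    have lim: "(\<lambda>n. dual_abs (F n) x) \<longlonglongrightarrow> 0" for x
      using assms wsn unfolding dual_lattice_weak_star_seq_cont_def by blast
    define S where "S x = mk (\<lambda>n. dual_abs (F n) x)" for x
    have Sa: "apply_bcontfun (S x) = (\<lambda>n. dual_abs (F n) x)" for x
      unfolding S_def
    proof (rule mk_apply[where b="2 * K * norm x"])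
      fix n
      have "\<bar>dual_abs (F n) x\<bar> \<le> 2 * norm (F n) * norm x" by (rule da_bound)
      also have "\<dots> \<le> 2 * K * norm x"
        using nF[of n] by (simp add: mult_right_mono)
      finally show "\<bar>dual_abs (F n) x\<bar> \<le> 2 * K * norm x" .
    qed
    have blS: "bounded_linear S"
    proof (rule bounded_linear_intro[where K="2 * K"])
      fix x y show "S (x + y) = S x + S y"
        by (rule bcontfun_eqI) (simp add: Sa da_add)
    next
      fix r x show "S (r *\<^sub>R x) = r *\<^sub>R S x"
        by (rule bcontfun_eqI) (simp add: Sa da_scale)
    next
      fix x show "norm (S x) \<le> norm x * (2 * K)"
      proof (rule norm_bound)
        fix n
        have "\<bar>dual_abs (F n) x\<bar> \<le> 2 * norm (F n) * norm x" by (rule da_bound)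
        also have "\<dots> \<le> 2 * K * norm x"
          using nF[of n] by (simp add: mult_right_mono)
        finally show "norm (apply_bcontfun (S x) n) \<le> norm x * (2 * K)"
          by (simp add: Sa mult.commute mult.left_commute)
      qed
    qed
    have rS: "range S \<subseteq> c0"
      unfolding c0_def using lim by (auto simp: Sa)
    have rw: "relatively_weakly_compact_in c0 (S ` abs ` A)"
      using G blS rS unfolding grothendieck_set_def by blast
    show "relatively_weakly_compact_in c0 (T ` sol A)"
    proof (rule c0_dom[OF rw])
      fix b n assume "b \<in> S ` abs ` A"
      then obtain x where b: "b = S \<bar>x\<bar>" by blast
      have "apply_bcontfun b n = dual_abs_pos (F n) \<bar>x\<bar>"
        unfolding b Sa by (rule da_pos) simp
      then show "0 \<le> apply_bcontfun b n" by (simp add: dap_nonneg)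
    next
      show "T ` sol A \<subseteq> c0" using rT by blast
    next
      fix c assume "c \<in> T ` sol A"
      then obtain y where y: "c = T y" "y \<in> sol A" by blast
      then obtain x where x: "x \<in> A" "\<bar>y\<bar> \<le> \<bar>x\<bar>" unfolding sol_def by blast
      show "\<exists>b\<in>S ` abs ` A. \<forall>n. \<bar>apply_bcontfun c n\<bar> \<le> apply_bcontfun b n"
      proof (intro bexI allI)
        fix n
        have "\<bar>apply_bcontfun c n\<bar> = \<bar>blinfun_apply (F n) y\<bar>" using y(1) Fa g_def by simp
        also have "\<dots> \<le> dual_abs_pos (F n) \<bar>x\<bar>" by (rule dap_abs_upper[OF x(2)])
        also have "\<dots> = apply_bcontfun (S \<bar>x\<bar>) n"
          unfolding Sa by (rule da_pos[symmetric]) simp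
        finally show "\<bar>apply_bcontfun c n\<bar> \<le> apply_bcontfun (S \<bar>x\<bar>) n" .
        show "S \<bar>x\<bar> \<in> S ` abs ` A" using x(1) by blast
      qed
    qed
  qed
qed

end
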